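(* Let $n\ge1$, $K=2n$, and let $x_1,\dots,x_n,y_1,\dots,y_n\in\mathbb{R}$. Define $m_k=\sum_{j=1}^n x_j^k-\sum_{j=1}^n y_j^k$ for $k=1,\dots,K$, and $\tilde m=(0,m_1,\dots,m_K)^T\in\mathbb{R}^{K+1}$. Write $$p(x)=(x-x_1)\cdots(x-x_n)=c_0+c_1x+\dots+c_nx^n,\qquad q(x)=(x-y_1)\cdots(x-y_n)=d_0+d_1x+\dots+d_nx^n$$ (so $c_n=d_n=1$), and set $\mathbf{c}=(c_n,c_{n-1},\dots,c_0,0,\dots,0)^T\in\mathbb{R}^{K+1}$ and $\mathbf{d}=(d_n,d_{n-1},\dots,d_0,0,\dots,0)^T\in\mathbb{R}^{K+1}$ (padded with $n$ zeros). Let $\tilde a,\tilde b\in\mathbb{R}^{K+1}$ be the vectors with first entry $1$ satisfying $\mathcal{T}(\tilde m)\tilde a=\Lambda\tilde a$ and $\mathcal{T}(\tilde m)\tilde b=-\Lambda\tilde b$. Then $$\mathcal{T}(\tilde a)\mathbf{c}=\mathbf{d},\qquad \mathcal{T}(\tilde b)\mathbf{d}=\mathbf{c}.$$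
   Context: For $\mathbf{x}=(x_1,\dots,x_N)^T\in\mathbb{R}^N$, $\mathcal{T}(\mathbf{x})$ denotes the $N\times N$ lower triangular Toeplitz matrix whose first column is $\mathbf{x}$, i.e. $\mathcal{T}(\mathbf{x})_{ij}=x_{i-j+1}$ for $i\ge j$ and $0$ for $i<j$. Here $N=K+1$ and $\Lambda=\mathrm{diag}(0,1,2,\dots,K)$. (The conditions on $\tilde a,\tilde b$ are lower triangular systems that determine them uniquely given first entry $1$.) *)

theory Defs
  imports "Jordan_Normal_Form.Matrix" "HOL-Computational_Algebra.Polynomial"
begin

text \<open>Vectors in R^N are represented as JNF vectors with indices 0..N-1;
  entry i (0-based) corresponds to entry i+1 of the paper.\<close>

definition lower_toeplitz :: "'a::zero vec \<Rightarrow> 'a mat" where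
  "lower_toeplitz v = mat (dim_vec v) (dim_vec v) (\<lambda>(i,j). if j \<le> i then v $ (i - j) else 0)"

definition Lambda_mat :: "nat \<Rightarrow> real mat" where
  "Lambda_mat K = mat (K+1) (K+1) (\<lambda>(i,j). if i = j then real i else 0)"

definition rev_coeff_vec :: "nat \<Rightarrow> nat \<Rightarrow> real poly \<Rightarrow> real vec" where
  "rev_coeff_vec n K p = vec (K+1) (\<lambda>i. if i \<le> n then coeff p (n - i) else 0)"

definition moment_vec :: "nat \<Rightarrow> nat \<Rightarrow> (nat \<Rightarrow> real) \<Rightarrow> (nat \<Rightarrow> real) \<Rightarrow> real vec" where
  "moment_vec n K x y = vec (K+1) (\<lambda>k. if k = 0 then 0
      else (\<Sum>j=1..n. x j ^ k) - (\<Sum>j=1..n. y j ^ k))"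

end

theory Submission imports Defs "HOL-Computational_Algebra.Polynomial_FPS" begin

definition Dop :: "real fps \<Rightarrow> real fps" where "Dop f = fps_X * fps_deriv f"
lemma Dop_nth: "fps_nth (Dop f) k = of_nat k * fps_nth f k"
  by (simp add: Dop_def fps_mult_fps_X_deriv_shift)
lemma Dop_mult: "Dop (f*g) = Dop f * g + f * Dop g"
  by (simp add: Dop_def algebra_simps)

definition Sx :: "(nat\<Rightarrow>real) \<Rightarrow> nat set \<Rightarrow> real fps" where
  "Sx x J = Abs_fps (\<lambda>k. if k=0 then 0 else (\<Sum>j\<in>J. x j ^ k))"
definition Px :: "(nat\<Rightarrow>real) \<Rightarrow> nat set \<Rightarrow> real fps" where
  "Px x J = (\<Prod>j\<in>J. 1 - fps_const (x j) * fps_X)"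


lemma geo: "(1 - fps_const (c::real) * fps_X) * Abs_fps (\<lambda>k. if k=0 then 0 else c^k) = fps_const c * fps_X"
proof (rule fps_ext)
  fix k
  have e: "(1 - fps_const c * fps_X) * Abs_fps (\<lambda>k. if k=0 then 0 else c^k)
     = Abs_fps (\<lambda>k. if k=0 then 0 else c^k) - fps_const c * (fps_X * Abs_fps (\<lambda>k. if k=0 then 0 else c^k))"
    by (simp only: left_diff_distrib mult_1_left mult.assoc)
  show "fps_nth ((1 - fps_const c * fps_X) * Abs_fps (\<lambda>k. if k=0 then 0 else c^k)) k = fps_nth (fps_const c * fps_X) k"
  proof (cases k)
    case 0 then show ?thesis unfolding e by simp
  next
    case (Suc m) then show ?thesis unfolding e
      by (cases m) simp_all
  qed
qed

lemma newton: "finite J \<Longrightarrow> Dop (Px x J) = - Px x J * Sx x J"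
proof (induction J rule: finite_induct)
  case empty
  show ?case by (simp add: Px_def Sx_def Dop_def fps_eq_iff)
next
  case (insert j J)
  define G where "G = Abs_fps (\<lambda>k. if k=0 then 0 else x j^k)"
  define L where "L = 1 - fps_const (x j) * fps_X"
  have S: "Sx x (insert j J) = G + Sx x J"
    using insert by (simp add: Sx_def G_def fps_eq_iff)
  have P: "Px x (insert j J) = L * Px x J"
    using insert by (simp add: Px_def L_def)
  have d1: "Dop L = - (fps_const (x j) * fps_X)"
    by (simp add: Dop_def L_def)
  have g: "L * G = fps_const (x j) * fps_X" using geo[of "x j"] by (simp add: L_def G_def)
  have "Dop (Px x (insert j J)) = - (fps_const (x j) * fps_X) * Px x J + L * (- Px x J * Sx x J)"
    unfolding P Dop_mult d1 insert.IH ..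
  also have "\<dots> = - (L * G) * Px x J - L * Px x J * Sx x J" unfolding g by (simp add: algebra_simps)
  also have "\<dots> = - Px x (insert j J) * Sx x (insert j J)" unfolding P S by (simp add: algebra_simps)
  finally show ?case .
qed

definition eqK :: "nat \<Rightarrow> real fps \<Rightarrow> real fps \<Rightarrow> bool" where
  "eqK K F G = (\<forall>i\<le>K. fps_nth F i = fps_nth G i)"

lemma eqK_mult: "eqK K F G \<Longrightarrow> eqK K (F*H) (G*H)"
  unfolding eqK_def fps_mult_nth by (auto intro!: sum.cong)

lemma eqK_trans: "eqK K F G \<Longrightarrow> eqK K G H \<Longrightarrow> eqK K F H"
  unfolding eqK_def by auto
lemma eqK_sym: "eqK K F G \<Longrightarrow> eqK K G F"
  unfolding eqK_def by auto
lemma eqK_add: "eqK K F G \<Longrightarrow> eqK K F' G' \<Longrightarrow> eqK K (F+F') (G+G')"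
  unfolding eqK_def by auto
lemma eqK_refl: "eqK K F F"
  unfolding eqK_def by auto

lemma uniq:
  assumes "fps_nth F 0 = 0" "fps_nth S 0 = 0" "eqK K (Dop F) (F * S)"
  shows "\<forall>k\<le>K. fps_nth F k = 0"
proof -
  have "k \<le> K \<longrightarrow> fps_nth F k = 0" for k
  proof (induction k rule: less_induct)
    case (less k)
    show ?case
    proof (cases k)
      case 0 then show ?thesis using assms(1) by simp
    next
      case (Suc m)
      show ?thesis
      proof
        assume kK: "k \<le> K"
        have "of_nat k * fps_nth F k = fps_nth (F * S) k"
          using assms(3) kK unfolding eqK_def by (metis Dop_nth)
        also have "\<dots> = (\<Sum>i=0..k. fps_nth F i * fps_nth S (k - i))" by (rule fps_mult_nth)
        also have "\<dots> = 0"
        proof (rule sum.neutral, rule ballI)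
          fix i assume "i \<in> {0..k}"
          then have "i < k \<or> i = k" by auto
          then show "fps_nth F i * fps_nth S (k - i) = 0"
            using less.IH kK assms(2) by auto
        qed
        finally show "fps_nth F k = 0" using Suc by simp
      qed
    qed
  qed
  then show ?thesis by auto
qed

lemma Px0: "finite J \<Longrightarrow> fps_nth (Px x J) 0 = 1"
  by (induction J rule: finite_induct) (simp_all add: Px_def)

lemma core:
  assumes "finite J" "fps_nth A 0 = 1" "eqK K (Dop A) (A * (Sx x J - Sx y J))"
  shows "eqK K (A * Px x J) (Px y J)"
proof -
  define U where "U = A * Px x J - Px y J"
  have U0: "fps_nth U 0 = 0" using assms Px0 by (simp add: U_def)
  have "Dop U = Dop A * Px x J + A * Dop (Px x J) - Dop (Px y J)"
    by (simp add: U_def Dop_mult Dop_def algebra_simps)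
  also have "\<dots> = Dop A * Px x J + (- A * Px x J * Sx x J + Px y J * Sx y J)"
    using newton[OF assms(1)] by (simp add: algebra_simps)
  finally have e1: "Dop U = Dop A * Px x J + (- A * Px x J * Sx x J + Px y J * Sx y J)" .
  have "eqK K (Dop U) (A * (Sx x J - Sx y J) * Px x J + (- A * Px x J * Sx x J + Px y J * Sx y J))"
    unfolding e1 by (intro eqK_add eqK_mult assms(3) eqK_refl)
  moreover have "A * (Sx x J - Sx y J) * Px x J + (- A * Px x J * Sx x J + Px y J * Sx y J) = U * (- Sx y J)"
    by (simp add: U_def algebra_simps)
  ultimately have "eqK K (Dop U) (U * (- Sx y J))" by simp
  then have "\<forall>k\<le>K. fps_nth U k = 0" by (rule uniq[OF U0, rotated]) (simp add: Sx_def)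
  then show ?thesis by (simp add: eqK_def U_def)
qed

definition vf :: "real vec \<Rightarrow> real fps" where
  "vf v = Abs_fps (\<lambda>k. if k < dim_vec v then v$k else 0)"

lemma toep_nth:
  assumes "dim_vec w = dim_vec v" "i < dim_vec v"
  shows "(lower_toeplitz v *\<^sub>v w) $ i = fps_nth (vf w * vf v) i"
proof -
  let ?N = "dim_vec v"
  have "(lower_toeplitz v *\<^sub>v w) $ i = (\<Sum>j\<in>{0..<?N}. (if j \<le> i then v $ (i - j) else 0) * w $ j)"
    using assms by (simp add: lower_toeplitz_def scalar_prod_def)
  also have "\<dots> = (\<Sum>j\<in>{0..<?N}. if j \<le> i then v $ (i - j) * w $ j else 0)"
    by (intro sum.cong) auto
  also have "\<dots> = (\<Sum>j\<in>{j\<in>{0..<?N}. j \<le> i}. v $ (i - j) * w $ j)"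
    by (rule sum.inter_filter[symmetric]) simp
  also have "{j\<in>{0..<?N}. j \<le> i} = {0..i}" using assms by auto
  also have "(\<Sum>j\<in>{0..i}. v $ (i - j) * w $ j) = fps_nth (vf w * vf v) i"
    unfolding fps_mult_nth vf_def using assms by (intro sum.cong) auto
  finally show ?thesis .
qed

lemma Lambda_nth:
  assumes "dim_vec a = K + 1" "k \<le> K"
  shows "(Lambda_mat K *\<^sub>v a) $ k = real k * a $ k"
proof -
  have "(Lambda_mat K *\<^sub>v a) $ k = (\<Sum>j\<in>{0..<K+1}. (if k = j then real k else 0) * a $ j)"
    using assms by (simp add: Lambda_mat_def scalar_prod_def)
  also have "\<dots> = (\<Sum>j\<in>{0..<K+1}. if k = j then real k * a $ j else 0)"
    by (intro sum.cong) auto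
  also have "\<dots> = real k * a $ k" using assms by simp
  finally show ?thesis .
qed

lemma moment_eqK:
  "eqK K (vf (moment_vec n K x y)) (Sx x {1..n} - Sx y {1..n})"
  unfolding eqK_def vf_def moment_vec_def Sx_def by auto

lemma refl_lin: "fps_of_poly (reflect_poly [:- c, 1:]) = 1 - fps_const (c::real) * fps_X"
  by (simp add: fps_eq_iff coeff_reflect_poly fps_of_poly_nth)

lemma Px_poly: "Px x {1..n} = fps_of_poly (reflect_poly (\<Prod>j=1..n. [:- x j, 1:]))"
  unfolding Px_def reflect_poly_prod fps_of_poly_prod refl_lin ..

lemma deg_p: "degree (\<Prod>j=1..n. [:- (x j::real), 1:]) = n"
  by (subst degree_prod_eq_sum_degree) auto

lemma rcv_nth:
  assumes "i \<le> K"
  shows "rev_coeff_vec n K (\<Prod>j=1..n. [:- x j, 1:]) $ i = fps_nth (Px x {1..n}) i"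
  using assms deg_p[of x n] unfolding Px_poly rev_coeff_vec_def
  by (simp add: fps_of_poly_nth coeff_reflect_poly)

lemma vf_nth: "k < dim_vec v \<Longrightarrow> fps_nth (vf v) k = v $ k"
  by (simp add: vf_def)

lemma part:
  assumes "dim_vec a = K+1" "a$0 = 1"
    "eqK K (Dop (vf a)) (vf a * (Sx x {1..n} - Sx y {1..n}))"
  shows "lower_toeplitz a *\<^sub>v rev_coeff_vec n K (\<Prod>j=1..n. [:- x j, 1:])
       = rev_coeff_vec n K (\<Prod>j=1..n. [:- y j, 1:])"
proof -
  have c: "eqK K (vf a * Px x {1..n}) (Px y {1..n})"
    by (rule core) (use assms in \<open>auto simp: vf_def\<close>)
  have cx: "eqK K (vf (rev_coeff_vec n K (\<Prod>j=1..n. [:- x j, 1:]))) (Px x {1..n})"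
    unfolding eqK_def using rcv_nth by (auto simp: vf_def rev_coeff_vec_def simp del: One_nat_def)
  show ?thesis
  proof (rule eq_vecI)
    show "dim_vec (lower_toeplitz a *\<^sub>v rev_coeff_vec n K (\<Prod>j=1..n. [:- x j, 1:])) =
      dim_vec (rev_coeff_vec n K (\<Prod>j=1..n. [:- y j, 1:]))"
      using assms by (simp add: lower_toeplitz_def rev_coeff_vec_def)
    fix i assume "i < dim_vec (rev_coeff_vec n K (\<Prod>j=1..n. [:- y j, 1:]))"
    then have i: "i \<le> K" by (simp add: rev_coeff_vec_def)
    have "(lower_toeplitz a *\<^sub>v rev_coeff_vec n K (\<Prod>j=1..n. [:- x j, 1:])) $ i
        = fps_nth (vf (rev_coeff_vec n K (\<Prod>j=1..n. [:- x j, 1:])) * vf a) i"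
      using assms i by (intro toep_nth) (auto simp: rev_coeff_vec_def)
    also have "\<dots> = fps_nth (Px x {1..n} * vf a) i"
      using eqK_mult[OF cx, of "vf a"] i by (simp add: eqK_def)
    also have "\<dots> = fps_nth (Px y {1..n}) i"
      using c i by (simp add: eqK_def mult.commute)
    also have "\<dots> = rev_coeff_vec n K (\<Prod>j=1..n. [:- y j, 1:]) $ i"
      using rcv_nth i by metis
    finally show "(lower_toeplitz a *\<^sub>v rev_coeff_vec n K (\<Prod>j=1..n. [:- x j, 1:])) $ i
        = rev_coeff_vec n K (\<Prod>j=1..n. [:- y j, 1:]) $ i" .
  qed
qed

theorem lemma3:
  fixes n :: nat and x y :: "nat \<Rightarrow> real" and a b :: "real vec"
  assumes "n \<ge> 1"
    and "dim_vec a = 2*n + 1" and "a $ 0 = 1"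
    and "lower_toeplitz (moment_vec n (2*n) x y) *\<^sub>v a = Lambda_mat (2*n) *\<^sub>v a"
    and "dim_vec b = 2*n + 1" and "b $ 0 = 1"
    and "lower_toeplitz (moment_vec n (2*n) x y) *\<^sub>v b = - (Lambda_mat (2*n) *\<^sub>v b)"
  shows "lower_toeplitz a *\<^sub>v (rev_coeff_vec n (2*n) (\<Prod>j=1..n. [:- x j, 1:]))
           = rev_coeff_vec n (2*n) (\<Prod>j=1..n. [:- y j, 1:])
       \<and> lower_toeplitz b *\<^sub>v (rev_coeff_vec n (2*n) (\<Prod>j=1..n. [:- y j, 1:]))
           = rev_coeff_vec n (2*n) (\<Prod>j=1..n. [:- x j, 1:])"
proof
  let ?K = "2*n"
  let ?m = "moment_vec n ?K x y"
  have dm: "dim_vec ?m = ?K + 1" by (simp add: moment_vec_def)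
  have ea: "eqK ?K (Dop (vf a)) (vf a * vf ?m)"
    unfolding eqK_def
  proof (intro allI impI)
    fix k assume k: "k \<le> ?K"
    have "fps_nth (vf a * vf ?m) k = (lower_toeplitz ?m *\<^sub>v a) $ k"
      using k assms(2) dm by (intro toep_nth[symmetric]) auto
    also have "\<dots> = real k * a $ k" using assms(4) Lambda_nth[OF assms(2) k] by simp
    also have "\<dots> = fps_nth (Dop (vf a)) k" using k assms(2) by (simp add: Dop_nth vf_nth)
    finally show "fps_nth (Dop (vf a)) k = fps_nth (vf a * vf ?m) k" by simp
  qed
  have "eqK ?K (vf a * vf ?m) (vf a * (Sx x {1..n} - Sx y {1..n}))"
    using eqK_mult[OF moment_eqK, of ?K n x y "vf a"] by (simp add: mult.commute)
  with ea have "eqK ?K (Dop (vf a)) (vf a * (Sx x {1..n} - Sx y {1..n}))" by (rule eqK_trans)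
  then show "lower_toeplitz a *\<^sub>v (rev_coeff_vec n ?K (\<Prod>j=1..n. [:- x j, 1:]))
           = rev_coeff_vec n ?K (\<Prod>j=1..n. [:- y j, 1:])"
    using assms(2,3) by (intro part) auto
next
  let ?K = "2*n"
  let ?m = "moment_vec n ?K x y"
  have dm: "dim_vec ?m = ?K + 1" by (simp add: moment_vec_def)
  have eb: "eqK ?K (Dop (vf b)) (vf b * (- vf ?m))"
    unfolding eqK_def
  proof (intro allI impI)
    fix k assume k: "k \<le> ?K"
    have "fps_nth (vf b * vf ?m) k = (lower_toeplitz ?m *\<^sub>v b) $ k"
      using k assms(5) dm by (intro toep_nth[symmetric]) auto
    also have "\<dots> = (- (Lambda_mat ?K *\<^sub>v b)) $ k" using assms(7) by simp
    also have "\<dots> = - ((Lambda_mat ?K *\<^sub>v b) $ k)" using k by (simp add: Lambda_mat_def)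
    also have "\<dots> = - (real k * b $ k)" using Lambda_nth[OF assms(5) k] by simp
    also have "\<dots> = - fps_nth (Dop (vf b)) k" using k assms(5) by (simp add: Dop_nth vf_nth)
    finally show "fps_nth (Dop (vf b)) k = fps_nth (vf b * - vf ?m) k" by simp
  qed
  have "eqK ?K (vf b * (- vf ?m)) (vf b * (Sx y {1..n} - Sx x {1..n}))"
    using moment_eqK[of ?K n x y] unfolding eqK_def fps_mult_nth
  proof (intro allI impI sum.cong refl)
    fix i j assume i: "i \<le> ?K" and j: "j \<in> {0..i}"
    then have t: "i - j \<le> ?K" by auto
    have "fps_nth (vf ?m) (i - j) = fps_nth (Sx x {1..n} - Sx y {1..n}) (i - j)"
      using moment_eqK[of ?K n x y] t unfolding eqK_def by blast
    then show "fps_nth (vf b) j * fps_nth (- vf ?m) (i - j) =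
      fps_nth (vf b) j * fps_nth (Sx y {1..n} - Sx x {1..n}) (i - j)" by simp
  qed
  with eb have "eqK ?K (Dop (vf b)) (vf b * (Sx y {1..n} - Sx x {1..n}))" by (rule eqK_trans)
  then show "lower_toeplitz b *\<^sub>v (rev_coeff_vec n ?K (\<Prod>j=1..n. [:- y j, 1:]))
           = rev_coeff_vec n ?K (\<Prod>j=1..n. [:- x j, 1:])"
    using assms(5,6) by (intro part) auto
qed
end
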